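(* Let $\mathcal{L}:\mathbb{R}^p\to\mathbb{R}$ be continuously differentiable, let $\theta_0\in\mathbb{R}^p$, and let $\mathcal{B}(\theta_0)\subseteq\mathbb{R}^p$ be a non-empty set containing $\theta_0$. Let $(\theta_t)_{t\ge0}$ be generated by gradient descent $\theta_{t+1}=\theta_t-\eta_t\nabla_\theta\mathcal{L}(\theta_t)$ with all iterates $\theta_t$, $t\ge1$, in $\mathcal{B}(\theta_0)$. Fix $t$ and suppose: (RSC condition) there is a non-empty set $\mathcal{N}_t$ such that (a) $\mathcal{N}_t\subseteq\mathcal{B}(\theta_0)$; (b) either (b.1) $\theta_{t+1}\in\mathcal{N}_t$ and either $\theta_t\notin\mathcal{N}_t$ or $\mathcal{L}(\theta_t)\ne\inf_{\theta\in\mathcal{N}_t}\mathcal{L}(\theta)$, or (b.2) there exists $\theta'\in\mathcal{N}_t$ with $\mathcal{L}(\theta')<\mathcal{L}(\theta_t)$; and (c) $\mathcal{L}$ satisfies $\alpha_t$-RSC with respect to $(\mathcal{N}_t,\theta_t)$ for some $\alpha_t>0$; (Smoothness condition) for some $\beta>0$, $\mathcal{L}(\theta')\le\mathcal{L}(\theta)+\langle\theta'-\theta,\nabla_\theta\mathcal{L}(\theta)\rangle+\frac{\beta}{2}\|\theta'-\theta\|_2^2$ for all $\theta,\theta'\in\mathcal{B}(\theta_0)$. Assume $\alpha_t\le\beta$ and $\eta_t=\omega_t/\beta$ with $\omega_t\in(0,2)$. Then $$\mathcal{L}(\theta_{t+1})-\inf_{\theta\in\mathcal{N}_t}\mathc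al{L}(\theta)\le\Big(1-\frac{\alpha_t\omega_t}{\beta}(2-\omega_t)\Big)\Big(\mathcal{L}(\theta_t)-\inf_{\theta\in\mathcal{N}_t}\mathcal{L}(\theta)\Big).$$
   Context: A function $\mathcal{L}$ satisfies $\alpha$-restricted strong convexity ($\alpha$-RSC) with respect to a tuple $(\mathcal{S},\theta)$, where $\mathcal{S}\subseteq\mathbb{R}^p$ and $\theta\in\mathbb{R}^p$ is fixed, if $\alpha>0$ and for every $\theta'\in\mathcal{S}$: $\mathcal{L}(\theta')\ge\mathcal{L}(\theta)+\langle\theta'-\theta,\nabla_\theta\mathcal{L}(\theta)\rangle+\frac{\alpha}{2}\|\theta'-\theta\|_2^2$. *)

theory Defs
  imports "HOL-Analysis.Analysis"
begin

definition RSC :: "('a::real_inner \<Rightarrow> real) \<Rightarrow> ('a \<Rightarrow> 'a) \<Rightarrow> real \<Rightarrow> 'a set \<Rightarrow> 'a \<Rightarrow> bool" where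
  "RSC L gradL \<alpha> S \<theta> \<longleftrightarrow> \<alpha> > 0 \<and>
     (\<forall>\<theta>'\<in>S. L \<theta>' \<ge> L \<theta> + (\<theta>' - \<theta>) \<bullet> gradL \<theta> + \<alpha> / 2 * (norm (\<theta>' - \<theta>))\<^sup>2)"

end

theory Submission
  imports Defs
begin

theorem lemma2:
  fixes L :: "real ^ 'p \<Rightarrow> real"
    and gradL :: "real ^ 'p \<Rightarrow> real ^ 'p"
    and \<theta> :: "nat \<Rightarrow> real ^ 'p"
    and \<theta>0 :: "real ^ 'p"
    and B N :: "(real ^ 'p) set"
    and \<eta> :: "nat \<Rightarrow> real"
    and t :: nat
    and \<alpha> \<beta> \<omega> :: real
  assumes grad: "\<And>x. (L has_derivative (\<lambda>h. h \<bullet> gradL x)) (at x)"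
    and grad_cont: "continuous_on UNIV gradL"
    and B0: "\<theta>0 \<in> B"
    and init: "\<theta> 0 = \<theta>0"
    and GD: "\<And>s. \<theta> (Suc s) = \<theta> s - \<eta> s *\<^sub>R gradL (\<theta> s)"
    and inB: "\<And>s. s \<ge> 1 \<Longrightarrow> \<theta> s \<in> B"
    and N_ne: "N \<noteq> {}"
    and N_sub: "N \<subseteq> B"
    and cond_b: "(\<theta> (Suc t) \<in> N \<and> (\<theta> t \<notin> N \<or> L (\<theta> t) \<noteq> (INF x\<in>N. L x)))
                 \<or> (\<exists>\<theta>'\<in>N. L \<theta>' < L (\<theta> t))"
    and rsc: "RSC L gradL \<alpha> N (\<theta> t)"
    and beta_pos: "\<beta> > 0"
    and smooth: "\<And>x y. x \<in> B \<Longrightarrow> y \<in> B \<Longrightarrow>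
                   L y \<le> L x + (y - x) \<bullet> gradL x + \<beta> / 2 * (norm (y - x))\<^sup>2"
    and alpha_le: "\<alpha> \<le> \<beta>"
    and step: "\<eta> t = \<omega> / \<beta>"
    and omega: "0 < \<omega>" "\<omega> < 2"
  shows "L (\<theta> (Suc t)) - (INF x\<in>N. L x)
           \<le> (1 - \<alpha> * \<omega> / \<beta> * (2 - \<omega>)) * (L (\<theta> t) - (INF x\<in>N. L x))"
proof -
  define x where "x = \<theta> t"
  define g where "g = gradL x"
  define y where "y = \<theta> (Suc t)"
  define m where "m = (INF z\<in>N. L z)"
  have xB: "x \<in> B" unfolding x_def using inB B0 init by (cases t) auto
  have yB: "y \<in> B" unfolding y_def using inB by auto
  have yx: "y - x = - (\<omega> / \<beta>) *\<^sub>R g" unfolding y_def x_def g_def using GD step by simp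
  have a: "\<alpha> > 0" and rs: "\<And>z. z \<in> N \<Longrightarrow> L z \<ge> L x + (z - x) \<bullet> g + \<alpha> / 2 * (norm (z - x))\<^sup>2"
    using rsc unfolding RSC_def x_def g_def by auto
  have quad: "(z - x) \<bullet> g + \<alpha> / 2 * (norm (z - x))\<^sup>2 \<ge> - (norm g)\<^sup>2 / (2 * \<alpha>)" for z
  proof -
    define d where "d = z - x"
    have "0 \<le> (norm (\<alpha> *\<^sub>R d + g))\<^sup>2" by simp
    also have "\<dots> = \<alpha>\<^sup>2 * (norm d)\<^sup>2 + 2 * \<alpha> * (d \<bullet> g) + (norm g)\<^sup>2"
    proof -
      have "(norm (\<alpha> *\<^sub>R d + g))\<^sup>2 = (\<alpha> *\<^sub>R d + g) \<bullet> (\<alpha> *\<^sub>R d + g)" by (rule power2_norm_eq_inner)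
      also have "\<dots> = \<alpha> * \<alpha> * (d \<bullet> d) + 2 * \<alpha> * (d \<bullet> g) + g \<bullet> g"
        by (simp add: inner_add_left inner_add_right inner_commute ring_distribs)
      also have "\<dots> = \<alpha>\<^sup>2 * (norm d)\<^sup>2 + 2 * \<alpha> * (d \<bullet> g) + (norm g)\<^sup>2"
        by (metis dot_square_norm power2_eq_square)
      finally show ?thesis .
    qed
    finally have "0 \<le> \<alpha>\<^sup>2 * (norm d)\<^sup>2 + 2 * \<alpha> * (d \<bullet> g) + (norm g)\<^sup>2" .
    then show ?thesis using a unfolding d_def[symmetric]
      by (simp add: field_simps power2_eq_square)
  qed
  have lb: "L x - (norm g)\<^sup>2 / (2 * \<alpha>) \<le> L z" if "z \<in> N" for z
    using rs[OF that] quad[of z] by linarith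
  have "L x - (norm g)\<^sup>2 / (2 * \<alpha>) \<le> m" unfolding m_def
    using N_ne lb by (intro cINF_greatest) auto
  hence G: "(norm g)\<^sup>2 \<ge> 2 * \<alpha> * (L x - m)" using a by (simp add: field_simps)
  have sm: "L y \<le> L x + (y - x) \<bullet> g + \<beta> / 2 * (norm (y - x))\<^sup>2"
    using smooth[OF xB yB] unfolding g_def .
  have "(y - x) \<bullet> g + \<beta> / 2 * (norm (y - x))\<^sup>2 = - (\<omega> * (2 - \<omega>) / (2 * \<beta>)) * (norm g)\<^sup>2"
  proof -
    have 1: "(y - x) \<bullet> g = - (\<omega> / \<beta>) * (norm g)\<^sup>2" unfolding yx
      by (simp add: dot_square_norm)
    have 2: "(norm (y - x))\<^sup>2 = (\<omega> / \<beta>)\<^sup>2 * (norm g)\<^sup>2" unfolding yx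
      by (simp add: power_mult_distrib power_divide power2_abs)
    have 3: "- (\<omega> / \<beta>) + \<beta> / 2 * (\<omega> / \<beta>)\<^sup>2 = - (\<omega> * (2 - \<omega>) / (2 * \<beta>))"
      using beta_pos by (simp add: field_simps power2_eq_square)
    show ?thesis unfolding 1 2 using 3 by (metis (no_types) mult.assoc distrib_right)
  qed
  hence sm2: "L y \<le> L x - (\<omega> * (2 - \<omega>) / (2 * \<beta>)) * (norm g)\<^sup>2" using sm by simp
  have c: "\<omega> * (2 - \<omega>) / (2 * \<beta>) \<ge> 0" using omega beta_pos by simp
  have "(\<omega> * (2 - \<omega>) / (2 * \<beta>)) * (2 * \<alpha> * (L x - m)) \<le> (\<omega> * (2 - \<omega>) / (2 * \<beta>)) * (norm g)\<^sup>2"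
    using G c by (rule mult_left_mono)
  hence "L y - m \<le> L x - m - (\<omega> * (2 - \<omega>) / (2 * \<beta>)) * (2 * \<alpha> * (L x - m))" using sm2 by linarith
  also have "\<dots> = (1 - \<alpha> * \<omega> / \<beta> * (2 - \<omega>)) * (L x - m)" using beta_pos by (simp add: field_simps)
  finally show ?thesis unfolding x_def y_def m_def .
qed

end
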